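(* Let $q \in C^1(\mathbb{R}^n,\mathbb{R})$ be a scalar function, and let $A$, $B$ and $D$ be linear differential operators with constant coefficients on functions $\mathbb{R}^n\to\mathbb{R}$ with $D = A + B$. Suppose there exist a non-zero real number $u$, a natural number $\lambda$ and a sufficiently smooth function $W:\mathbb{R}^n\to\mathbb{R}$ such that $$A^{\lambda+1} W(\mathbf{x}) = q(\mathbf{x}) \quad\text{(integration condition)},\qquad B^{\lambda+1} W(\mathbf{x}) = (-1)^\lambda (u-1)\, q(\mathbf{x}) \quad\text{(relaxed annihilator condition)}.$$ Define $$Q(\mathbf{x}) := \sum_{p=0}^{\lambda} \frac{(-1)^p}{u} A^{\lambda-p} B^p W(\mathbf{x}).$$ Then $D Q = q$.
   Context: Powers of operators denote repeated application, with $A^0$, $B^0$ the identity. *)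

theory Defs
  imports "HOL-Analysis.Analysis"
begin

type_synonym 'n rfun = "real^'n \<Rightarrow> real"

definition partial :: "'n::finite \<Rightarrow> 'n rfun \<Rightarrow> 'n rfun" where
  "partial i f = (\<lambda>x. deriv (\<lambda>t. f (x + t *\<^sub>R axis i 1)) 0)"

text \<open>Linear differential operators with constant coefficients: the operators
  generated from the identity and the partial derivatives by real scalar
  multiples, sums and compositions (i.e. polynomials in the partials).\<close>
inductive_set const_coeff_diff_op :: "('n::finite rfun \<Rightarrow> 'n rfun) set" where
  cc_id: "(\<lambda>f. f) \<in> const_coeff_diff_op"
| cc_partial: "partial i \<in> const_coeff_diff_op"
| cc_scale: "L \<in> const_coeff_diff_op \<Longrightarrow> (\<lambda>f x. c * L f x) \<in> const_coeff_diff_op"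
| cc_add: "L \<in> const_coeff_diff_op \<Longrightarrow> M \<in> const_coeff_diff_op \<Longrightarrow>
      (\<lambda>f x. L f x + M f x) \<in> const_coeff_diff_op"
| cc_comp: "L \<in> const_coeff_diff_op \<Longrightarrow> M \<in> const_coeff_diff_op \<Longrightarrow>
      (\<lambda>f. L (M f)) \<in> const_coeff_diff_op"

definition C1_fun :: "'n::finite rfun \<Rightarrow> bool" where
  "C1_fun f \<longleftrightarrow> f differentiable_on UNIV \<and> (\<forall>i. continuous_on UNIV (partial i f))"

definition smooth_fun :: "'n::finite rfun \<Rightarrow> bool" where
  "smooth_fun f \<longleftrightarrow> (\<forall>is. (foldr partial is f) differentiable_on UNIV)"

end

theory Submission
  imports Defs
begin


lemma line_deriv:
  fixes f :: "real^'n::finite \<Rightarrow> real"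
  assumes "(f has_derivative f') (at (y + t0 *\<^sub>R e))"
  shows "((\<lambda>t. f (y + t *\<^sub>R e)) has_real_derivative f' e) (at t0)"
proof -
  have lin: "linear f'" using assms has_derivative_linear by blast
  have "((\<lambda>t. y + t *\<^sub>R e) has_derivative (\<lambda>h. h *\<^sub>R e)) (at t0)"
    by (auto intro!: derivative_eq_intros)
  from has_derivative_compose[OF this assms]
  have "((\<lambda>t. f (y + t *\<^sub>R e)) has_derivative (\<lambda>h. f' (h *\<^sub>R e))) (at t0)"
    by (simp add: o_def)
  moreover have "(\<lambda>h. f' (h *\<^sub>R e)) = (*) (f' e)"
    using lin by (auto simp: linear_scale fun_eq_iff)
  ultimately show ?thesis by (simp add: has_field_derivative_def)
qed

lemma line_deriv2:
  fixes f :: "real^'n::finite \<Rightarrow> real"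
  assumes "f differentiable (at (y + t0 *\<^sub>R e))"
  shows "((\<lambda>t. f (y + t *\<^sub>R e)) has_real_derivative
            deriv (\<lambda>t. f ((y + t0 *\<^sub>R e) + t *\<^sub>R e)) 0) (at t0)"
proof -
  obtain f' where f': "(f has_derivative f') (at (y + t0 *\<^sub>R e))"
    using assms differentiable_def by blast
  have "((\<lambda>t. f ((y + t0 *\<^sub>R e) + t *\<^sub>R e)) has_real_derivative f' e) (at 0)"
    by (rule line_deriv) (use f' in simp)
  hence "deriv (\<lambda>t. f ((y + t0 *\<^sub>R e) + t *\<^sub>R e)) 0 = f' e" by (rule DERIV_imp_deriv)
  with line_deriv[OF f'] show ?thesis by simp
qed

lemma partial_DERIV:
  fixes f :: "real^'n::finite \<Rightarrow> real"
  assumes "f differentiable (at (y + t0 *\<^sub>R axis i 1))"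
  shows "((\<lambda>t. f (y + t *\<^sub>R axis i 1)) has_real_derivative partial i f (y + t0 *\<^sub>R axis i 1)) (at t0)"
  using line_deriv2[OF assms] by (simp add: partial_def)

lemma diff_at: "f differentiable_on UNIV \<Longrightarrow> f differentiable (at z)"
  by (simp add: differentiable_on_def)

lemma delta_mvt:
  fixes f :: "real^'n::finite \<Rightarrow> real"
  assumes df: "\<And>z. f differentiable (at z)" and dp: "\<And>z. partial i f differentiable (at z)"
    and h: "h > 0"
  shows "\<exists>s t. 0 < s \<and> s < h \<and> 0 < t \<and> t < h \<and>
     f (x + h *\<^sub>R axis i 1 + h *\<^sub>R axis j 1) - f (x + h *\<^sub>R axis i 1) - f (x + h *\<^sub>R axis j 1) + f x
       = h * h * partial j (partial i f) (x + s *\<^sub>R axis i 1 + t *\<^sub>R axis j 1)"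
proof -
  define ei where "ei = (axis i 1 :: real^'n)"
  define ej where "ej = (axis j 1 :: real^'n)"
  define P where "P = partial i f"
  define G where "G = (\<lambda>s. f ((x + h *\<^sub>R ej) + s *\<^sub>R ei) - f (x + s *\<^sub>R ei))"
  have "\<exists>s. 0 < s \<and> s < h \<and> G h - G 0 = (h - 0) * (P ((x + h *\<^sub>R ej) + s *\<^sub>R ei) - P (x + s *\<^sub>R ei))"
    unfolding G_def P_def ei_def
    by (rule MVT2[OF h]) (intro DERIV_diff partial_DERIV df)
  then obtain s where s: "0 < s" "s < h"
    and Gs: "G h - G 0 = h * (P ((x + h *\<^sub>R ej) + s *\<^sub>R ei) - P (x + s *\<^sub>R ei))" by auto
  define H where "H = (\<lambda>t. P ((x + s *\<^sub>R ei) + t *\<^sub>R ej))"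
  have "\<exists>t. 0 < t \<and> t < h \<and> H h - H 0 = (h - 0) * partial j P ((x + s *\<^sub>R ei) + t *\<^sub>R ej)"
    unfolding H_def ej_def
    by (rule MVT2[OF h]) (intro partial_DERIV, use dp P_def in auto)
  then obtain t where t: "0 < t" "t < h"
    and Ht: "H h - H 0 = h * partial j P ((x + s *\<^sub>R ei) + t *\<^sub>R ej)" by auto
  have "P ((x + h *\<^sub>R ej) + s *\<^sub>R ei) - P (x + s *\<^sub>R ei) = H h - H 0"
    unfolding H_def by (simp add: algebra_simps)
  hence "G h - G 0 = h * h * partial j P ((x + s *\<^sub>R ei) + t *\<^sub>R ej)"
    using Gs Ht by simp
  moreover have "G h - G 0 = f (x + h *\<^sub>R ei + h *\<^sub>R ej) - f (x + h *\<^sub>R ei) - f (x + h *\<^sub>R ej) + f x"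
    unfolding G_def by (simp add: algebra_simps)
  ultimately show ?thesis using s t unfolding ei_def ej_def P_def by metis
qed

lemma clairaut:
  fixes f :: "real^'n::finite \<Rightarrow> real"
  assumes df: "\<And>z. f differentiable (at z)"
    and dpi: "\<And>z. partial i f differentiable (at z)"
    and dpj: "\<And>z. partial j f differentiable (at z)"
    and dij: "\<And>z. partial j (partial i f) differentiable (at z)"
    and dji: "\<And>z. partial i (partial j f) differentiable (at z)"
  shows "partial j (partial i f) x = partial i (partial j f) x"
proof (rule ccontr)
  define M1 where "M1 = partial j (partial i f)"
  define M2 where "M2 = partial i (partial j f)"
  assume ne: "partial j (partial i f) x \<noteq> partial i (partial j f) x"
  define \<epsilon> where "\<epsilon> = \<bar>M1 x - M2 x\<bar> / 2"
  have ep: "\<epsilon> > 0" using ne by (simp add: \<epsilon>_def M1_def M2_def)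
  have c1: "continuous (at x) M1" using dij differentiable_imp_continuous_within M1_def by blast
  have c2: "continuous (at x) M2" using dji differentiable_imp_continuous_within M2_def by blast
  obtain d1 where d1: "d1 > 0" "\<And>y. dist y x < d1 \<Longrightarrow> dist (M1 y) (M1 x) < \<epsilon>"
    using c1 ep unfolding continuous_at_eps_delta by blast
  obtain d2 where d2: "d2 > 0" "\<And>y. dist y x < d2 \<Longrightarrow> dist (M2 y) (M2 x) < \<epsilon>"
    using c2 ep unfolding continuous_at_eps_delta by blast
  define h where "h = min d1 d2 / 2"
  have h: "h > 0" using d1 d2 by (simp add: h_def)
  have close: "dist (x + s *\<^sub>R axis a 1 + t *\<^sub>R axis b 1) x < min d1 d2"
    if "0 < s" "s < h" "0 < t" "t < h" for s t :: real and a b :: 'n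
  proof -
    have "dist (x + s *\<^sub>R axis a 1 + t *\<^sub>R axis b 1) x = norm (s *\<^sub>R axis a (1::real) + t *\<^sub>R axis b 1)"
      by (simp add: dist_norm)
    also have "\<dots> \<le> norm (s *\<^sub>R axis a (1::real)) + norm (t *\<^sub>R axis b (1::real))"
      by (rule norm_triangle_ineq)
    also have "\<dots> = s + t" using that by simp
    also have "\<dots> < min d1 d2" using that h_def by simp
    finally show ?thesis .
  qed
  obtain s t where st: "0 < s" "s < h" "0 < t" "t < h" and e1:
     "f (x + h *\<^sub>R axis i 1 + h *\<^sub>R axis j 1) - f (x + h *\<^sub>R axis i 1) - f (x + h *\<^sub>R axis j 1) + f x
       = h * h * M1 (x + s *\<^sub>R axis i 1 + t *\<^sub>R axis j 1)"
    using delta_mvt[OF df dpi h] M1_def by blast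
  obtain s' t' where st': "0 < s'" "s' < h" "0 < t'" "t' < h" and e2:
     "f (x + h *\<^sub>R axis j 1 + h *\<^sub>R axis i 1) - f (x + h *\<^sub>R axis j 1) - f (x + h *\<^sub>R axis i 1) + f x
       = h * h * M2 (x + s' *\<^sub>R axis j 1 + t' *\<^sub>R axis i 1)"
    using delta_mvt[OF df dpj h] M2_def by blast
  have "h * h * M1 (x + s *\<^sub>R axis i 1 + t *\<^sub>R axis j 1) = h * h * M2 (x + s' *\<^sub>R axis j 1 + t' *\<^sub>R axis i 1)"
    using e1 e2 by (simp add: algebra_simps)
  hence eq: "M1 (x + s *\<^sub>R axis i 1 + t *\<^sub>R axis j 1) = M2 (x + s' *\<^sub>R axis j 1 + t' *\<^sub>R axis i 1)"
    using h by simp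
  have a1: "dist (M1 (x + s *\<^sub>R axis i 1 + t *\<^sub>R axis j 1)) (M1 x) < \<epsilon>"
    using d1(2) close[OF st] by simp
  have a2: "dist (M2 (x + s' *\<^sub>R axis j 1 + t' *\<^sub>R axis i 1)) (M2 x) < \<epsilon>"
    using d2(2) close[OF st'] by simp
  show False
  proof -
    fix a b c d :: real
    have gen: "\<lbrakk>\<bar>a - c\<bar> < \<bar>c - d\<bar> / 2; \<bar>b - d\<bar> < \<bar>c - d\<bar> / 2; a = b\<rbrakk> \<Longrightarrow> False" for a b c d :: real
      by (simp add: abs_if split: if_splits)
    show False by (rule gen[OF a1[unfolded \<epsilon>_def dist_real_def] a2[unfolded \<epsilon>_def dist_real_def] eq])
  qed
qed


lemma smooth_diff: "smooth_fun f \<Longrightarrow> f differentiable (at z)"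
proof -
  assume "smooth_fun f"
  then have "foldr partial [] f differentiable_on UNIV" unfolding smooth_fun_def by blast
  then show ?thesis by (simp add: differentiable_on_def)
qed

lemma smooth_foldr: "smooth_fun f \<Longrightarrow> smooth_fun (foldr partial is f)"
  unfolding smooth_fun_def
proof (intro allI)
  fix js assume "\<forall>is. foldr partial is f differentiable_on UNIV"
  then have "foldr partial (js @ is) f differentiable_on UNIV" by blast
  then show "foldr partial js (foldr partial is f) differentiable_on UNIV" by simp
qed

lemma smooth_partial: "smooth_fun f \<Longrightarrow> smooth_fun (partial i f)"
  using smooth_foldr[of f "[i]"] by simp

lemma partial_add:
  assumes "\<And>z. f differentiable (at z)" "\<And>z. g differentiable (at z)"
  shows "partial i (\<lambda>x. f x + g x) = (\<lambda>x. partial i f x + partial i g x)"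
proof
  fix z
  have "((\<lambda>t. f (z + t *\<^sub>R axis i 1) + g (z + t *\<^sub>R axis i 1)) has_real_derivative
     partial i f (z + 0 *\<^sub>R axis i 1) + partial i g (z + 0 *\<^sub>R axis i 1)) (at 0)"
    by (intro DERIV_add partial_DERIV assms)
  thus "partial i (\<lambda>x. f x + g x) z = partial i f z + partial i g z"
    unfolding partial_def[of i "\<lambda>x. f x + g x"] by (simp add: DERIV_imp_deriv)
qed

lemma partial_scale:
  assumes "\<And>z. f differentiable (at z)"
  shows "partial i (\<lambda>x. c * f x) = (\<lambda>x. c * partial i f x)"
proof
  fix z
  have "((\<lambda>t. c * f (z + t *\<^sub>R axis i 1)) has_real_derivative
     c * partial i f (z + 0 *\<^sub>R axis i 1)) (at 0)"
    by (intro DERIV_cmult partial_DERIV assms)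
  thus "partial i (\<lambda>x. c * f x) z = c * partial i f z"
    unfolding partial_def[of i "\<lambda>x. c * f x"] by (simp add: DERIV_imp_deriv)
qed

lemma foldr_add:
  assumes "smooth_fun f" "smooth_fun g"
  shows "foldr partial is (\<lambda>x. f x + g x) = (\<lambda>x. foldr partial is f x + foldr partial is g x)"
proof (induction "is")
  case Nil then show ?case by simp
next
  case (Cons a "is")
  have "foldr partial (a # is) (\<lambda>x. f x + g x) = partial a (\<lambda>x. foldr partial is f x + foldr partial is g x)"
    using Cons by simp
  also have "\<dots> = (\<lambda>x. foldr partial (a # is) f x + foldr partial (a # is) g x)"
    by (simp add: partial_add smooth_diff smooth_foldr assms)
  finally show ?case .
qed

lemma foldr_scale:
  assumes "smooth_fun f"
  shows "foldr partial is (\<lambda>x. c * f x) = (\<lambda>x. c * foldr partial is f x)"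
proof (induction "is")
  case Nil then show ?case by simp
next
  case (Cons a "is")
  then show ?case
    by (simp add: partial_scale smooth_diff smooth_foldr assms)
qed

lemma smooth_add: "smooth_fun f \<Longrightarrow> smooth_fun g \<Longrightarrow> smooth_fun (\<lambda>x. f x + g x)"
  unfolding smooth_fun_def[of "\<lambda>x. f x + g x"]
proof (intro allI)
  fix js assume "smooth_fun f" "smooth_fun g"
  then have "foldr partial js f differentiable_on UNIV" "foldr partial js g differentiable_on UNIV"
    unfolding smooth_fun_def by blast+
  then show "foldr partial js (\<lambda>x. f x + g x) differentiable_on UNIV"
    using \<open>smooth_fun f\<close> \<open>smooth_fun g\<close> by (simp add: foldr_add differentiable_on_add)
qed

lemma smooth_scale: "smooth_fun f \<Longrightarrow> smooth_fun (\<lambda>x. c * f x)"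
  unfolding smooth_fun_def[of "\<lambda>x. c * f x"]
proof (intro allI)
  fix js assume "smooth_fun f"
  then have "foldr partial js f differentiable_on UNIV"
    unfolding smooth_fun_def by blast
  then show "foldr partial js (\<lambda>x. c * f x) differentiable_on UNIV"
    using \<open>smooth_fun f\<close> by (simp add: foldr_scale differentiable_on_mult)
qed

lemma partial_clairaut: "smooth_fun f \<Longrightarrow> partial j (partial i f) = partial i (partial j f)"
  by (rule ext, rule clairaut) (auto intro!: smooth_diff smooth_partial)

lemma op_props:
  assumes "L \<in> const_coeff_diff_op"
  shows "(\<forall>f. smooth_fun f \<longrightarrow> smooth_fun (L f)) \<and>
    (\<forall>f g. smooth_fun f \<longrightarrow> smooth_fun g \<longrightarrow> L (\<lambda>x. f x + g x) = (\<lambda>x. L f x + L g x)) \<and>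
    (\<forall>f c. smooth_fun f \<longrightarrow> L (\<lambda>x. c * f x) = (\<lambda>x. c * L f x)) \<and>
    (\<forall>f i. smooth_fun f \<longrightarrow> L (partial i f) = partial i (L f))"
  using assms
proof (induction rule: const_coeff_diff_op.induct)
  case cc_id
  then show ?case by simp
next
  case (cc_partial j)
  have "\<forall>f i. smooth_fun f \<longrightarrow> partial j (partial i f) = partial i (partial j f)"
    using partial_clairaut by blast
  then show ?case
    by (auto simp: smooth_partial partial_add partial_scale smooth_diff)
next
  case (cc_scale L d)
  then show ?case
    by (auto simp: smooth_scale partial_scale smooth_diff algebra_simps)
next
  case (cc_add L M)
  then show ?case
    by (auto simp: smooth_add partial_add smooth_diff algebra_simps)
next
  case (cc_comp L M)
  then show ?case
    by (auto simp: smooth_partial)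
qed

lemma op_commute:
  assumes L: "L \<in> const_coeff_diff_op" and M: "M \<in> const_coeff_diff_op"
  shows "smooth_fun f \<Longrightarrow> L (M f) = M (L f)"
  using M
proof (induction arbitrary: f rule: const_coeff_diff_op.induct)
  case cc_id
  then show ?case by simp
next
  case (cc_partial i)
  then show ?case using op_props[OF L] by auto
next
  case (cc_scale M c)
  then show ?case using op_props[OF L] op_props[OF cc_scale.hyps(1)] by auto
next
  case (cc_add M1 M2)
  then show ?case using op_props[OF L] op_props[OF cc_add.hyps(1)] op_props[OF cc_add.hyps(2)] by auto
next
  case (cc_comp M1 M2)
  then show ?case using op_props[OF L] op_props[OF cc_comp.hyps(1)] op_props[OF cc_comp.hyps(2)] by auto
qed


lemma pow_smooth: "L \<in> const_coeff_diff_op \<Longrightarrow> smooth_fun f \<Longrightarrow> smooth_fun ((L ^^ k) f)"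
  by (induction k) (auto dest: op_props)

lemma pow_commute:
  assumes "L \<in> const_coeff_diff_op" "M \<in> const_coeff_diff_op" "smooth_fun f"
  shows "M ((L ^^ k) f) = (L ^^ k) (M f)"
proof (induction k)
  case 0 then show ?case by simp
next
  case (Suc k)
  have "M ((L ^^ Suc k) f) = L (M ((L ^^ k) f))"
    using op_commute[OF assms(1,2) pow_smooth[OF assms(1,3)]] by simp
  then show ?case using Suc by simp
qed

lemma smooth_zero: "smooth_fun (\<lambda>x::real^'n::finite. 0)"
proof -
  have p0: "partial i (\<lambda>x::real^'n. 0) = (\<lambda>x. 0)" for i
    by (simp add: partial_def)
  have "foldr partial is (\<lambda>x::real^'n. 0) = (\<lambda>x. 0)" for "is"
    by (induction "is") (simp_all add: p0)
  then show ?thesis unfolding smooth_fun_def by simp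
qed

lemma op_sum:
  assumes L: "L \<in> const_coeff_diff_op" and S: "finite S"
  shows "(\<forall>p\<in>S. smooth_fun (f p)) \<Longrightarrow>
     smooth_fun (\<lambda>x. \<Sum>p\<in>S. c p * f p x) \<and>
     L (\<lambda>x. \<Sum>p\<in>S. c p * f p x) = (\<lambda>x. \<Sum>p\<in>S. c p * L (f p) x)"
  using S
proof (induction S rule: finite_induct)
  case empty
  have "L (\<lambda>x. 0 * 0) = (\<lambda>x. 0 * L (\<lambda>x. 0) x)"
    using op_props[OF L] smooth_zero by blast
  then show ?case using smooth_zero by simp
next
  case (insert a S)
  have sa: "smooth_fun (\<lambda>x. c a * f a x)" using insert smooth_scale by auto
  have sS: "smooth_fun (\<lambda>x. \<Sum>p\<in>S. c p * f p x)" using insert by auto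
  have "L (\<lambda>x. \<Sum>p\<in>insert a S. c p * f p x) = L (\<lambda>x. c a * f a x + (\<Sum>p\<in>S. c p * f p x))"
    using insert by simp
  also have "\<dots> = (\<lambda>x. L (\<lambda>x. c a * f a x) x + L (\<lambda>x. \<Sum>p\<in>S. c p * f p x) x)"
    using op_props[OF L] sa sS by blast
  also have "\<dots> = (\<lambda>x. \<Sum>p\<in>insert a S. c p * L (f p) x)"
    using insert op_props[OF L] by simp
  finally show ?case using insert smooth_add[OF sa sS] by simp
qed

lemma telescope:
  fixes a :: "nat \<Rightarrow> real"
  shows "(\<Sum>p\<le>n. (-1) ^ p * (a p + a (Suc p))) = a 0 + (-1) ^ n * a (Suc n)"
  by (induction n) (simp_all add: algebra_simps)

theorem theorem4p2:
  fixes q W :: "real^'n::finite \<Rightarrow> real"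
    and A B D :: "(real^'n \<Rightarrow> real) \<Rightarrow> (real^'n \<Rightarrow> real)"
    and u :: real and lam :: nat
  assumes "C1_fun q"
    and "A \<in> const_coeff_diff_op" and "B \<in> const_coeff_diff_op" and "D \<in> const_coeff_diff_op"
    and "\<And>f. D f = (\<lambda>x. A f x + B f x)"
    and "u \<noteq> 0"
    and "smooth_fun W"
    and "(A ^^ (lam + 1)) W = q"
    and "(B ^^ (lam + 1)) W = (\<lambda>x. (-1) ^ lam * (u - 1) * q x)"
  shows "D (\<lambda>x. \<Sum>p\<le>lam. ((-1) ^ p / u) * (A ^^ (lam - p)) ((B ^^ p) W) x) = q"
proof -
  note A = assms(2) and B = assms(3) and W = assms(7)
  define T where "T p = (A ^^ (lam - p)) ((B ^^ p) W)" for p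
  define X where "X p = (A ^^ (lam + 1 - p)) ((B ^^ p) W)" for p
  define c where "c p = (-1) ^ p / u" for p :: nat
  have sT: "\<forall>p\<in>{..lam}. smooth_fun (T p)"
    unfolding T_def using pow_smooth[OF A pow_smooth[OF B W]] by blast
  have AT: "A (T p) = X p" if "p \<le> lam" for p
  proof -
    have "lam + 1 - p = Suc (lam - p)" using that by simp
    then show ?thesis unfolding T_def X_def by simp
  qed
  have BT: "B (T p) = X (Suc p)" for p
  proof -
    have "B (T p) = (A ^^ (lam - p)) (B ((B ^^ p) W))"
      unfolding T_def by (rule pow_commute[OF A B pow_smooth[OF B W]])
    then show ?thesis unfolding X_def by simp
  qed
  have QA: "A (\<lambda>x. \<Sum>p\<le>lam. c p * T p x) = (\<lambda>x. \<Sum>p\<le>lam. c p * X p x)"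
    using op_sum[OF A finite_atMost sT, of c] AT by simp
  have QB: "B (\<lambda>x. \<Sum>p\<le>lam. c p * T p x) = (\<lambda>x. \<Sum>p\<le>lam. c p * X (Suc p) x)"
    using op_sum[OF B finite_atMost sT, of c] BT by simp
  have X0: "X 0 = q" using assms(8) unfolding X_def by simp
  have XS: "X (Suc lam) = (\<lambda>x. (-1) ^ lam * (u - 1) * q x)" using assms(9) unfolding X_def by simp
  have "D (\<lambda>x. \<Sum>p\<le>lam. c p * T p x) = (\<lambda>x. (\<Sum>p\<le>lam. c p * X p x) + (\<Sum>p\<le>lam. c p * X (Suc p) x))"
    using assms(5) QA QB by simp
  also have "\<dots> = q"
  proof
    fix x
    have "(\<Sum>p\<le>lam. c p * X p x) + (\<Sum>p\<le>lam. c p * X (Suc p) x)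
        = (\<Sum>p\<le>lam. (-1) ^ p * (X p x + X (Suc p) x)) / u"
      unfolding c_def sum.distrib[symmetric] sum_divide_distrib
      by (rule sum.cong) (simp_all add: algebra_simps add_divide_distrib)
    also have "\<dots> = (X 0 x + (-1) ^ lam * X (Suc lam) x) / u"
      using telescope[of "\<lambda>p. X p x" lam] by simp
    also have "\<dots> = (q x + ((-1) ^ lam * (-1) ^ lam) * (u - 1) * q x) / u"
      using X0 XS by (simp add: algebra_simps)
    also have "\<dots> = q x"
      using assms(6) by (simp add: power_mult_distrib[symmetric] field_simps)
    finally show "(\<Sum>p\<le>lam. c p * X p x) + (\<Sum>p\<le>lam. c p * X (Suc p) x) = q x" .
  qed
  finally show ?thesis unfolding c_def T_def by simp
qed

end
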